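(* Let $K$ be an infinite field, let $n \ge 1$, and let $\mathcal{A} \subseteq (\mathbb{Z}_{\ge 0})^n$ be a support set that is homogeneous of some degree $d$ and contains the exponent vector of a power $x_i^d$ of some variable. Let $G \subseteq S_n$ be a subgroup acting transitively on the variables $x_1,\dots,x_n$. Then for general coefficients of $f \in K^{\mathcal{A}}$ with respect to $\mathcal{A}$, one has $\sqrt{(G.f)} = (x_1,\dots,x_n)$ in $K[x_1,\dots,x_n]$; in particular the common zero set of $G.f$ in $\overline{K}^n$ is $\{0\}$.
   Context: A support set is a non-empty finite subset $\mathcal{A}\subseteq(\mathbb{Z}_{\ge0})^n$; monomials of $K[x_1,\dots,x_n]$ are identified with their exponent vectors. $\mathcal{A}$ is homogeneous of degree $d$ if $\sum_i a_i = d$ for all $a\in\mathcal{A}$. $K^{\mathcal{A}}$ is identified with the set of polynomials $f$ whose support (set of monomials occurring with nonzero coefficient) is contained in $\mathcal{A}$. $S_n$ acts on $K[x_1,\dots,x_n]$ by $\sigma.x_i = x_{\sigma(i)}$; for a subgroup $G$, $G.f$ denotes the orbit of $f$ and $(G.f)$ the ideal it generates. An assertion holds "for general coefficients of $f$ with respect to $\mathcal{A}$" if the set of $f\in K^{\mathcal{A}}$ for which it holds contains a non-empty Zariski-open subset of $K^{\mathcal{A}}$. *)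

theory Defs
  imports Main "HOL-Library.Poly_Mapping"
begin

text \<open>Multivariate polynomials over 'a in the variables of type 'v are represented as
  finitely supported maps from exponent vectors (monomials) (finitely supported exponent maps) to coefficients.
  The convolution product of Poly_Mapping makes this the polynomial ring.\<close>

type_synonym ('v, 'a) mpoly = "('v \<Rightarrow>\<^sub>0 nat) \<Rightarrow>\<^sub>0 'a"

definition mmonom :: "('v \<Rightarrow>\<^sub>0 nat) \<Rightarrow> 'a::zero \<Rightarrow> ('v, 'a) mpoly" where
  "mmonom a c = Poly_Mapping.single a c"

definition mvar :: "'v \<Rightarrow> ('v, 'a::{zero,one}) mpoly" where
  "mvar i = Poly_Mapping.single (Poly_Mapping.single i 1) 1"

definition mdeg :: "('v \<Rightarrow>\<^sub>0 nat) \<Rightarrow> nat" where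
  "mdeg a = (\<Sum>i\<in>Poly_Mapping.keys a. Poly_Mapping.lookup a i)"

definition perm_mono :: "('v \<Rightarrow> 'v) \<Rightarrow> ('v \<Rightarrow>\<^sub>0 nat) \<Rightarrow> ('v \<Rightarrow>\<^sub>0 nat)" where
  "perm_mono \<sigma> a = (\<Sum>i\<in>Poly_Mapping.keys a. Poly_Mapping.single (\<sigma> i) (Poly_Mapping.lookup a i))"

definition perm_poly :: "('v \<Rightarrow> 'v) \<Rightarrow> ('v, 'a::comm_monoid_add) mpoly \<Rightarrow> ('v, 'a) mpoly" where
  "perm_poly \<sigma> p = (\<Sum>a\<in>Poly_Mapping.keys p. Poly_Mapping.single (perm_mono \<sigma> a) (Poly_Mapping.lookup p a))"

definition meval :: "('w, 'a::comm_ring_1) mpoly \<Rightarrow> ('w \<Rightarrow> 'a) \<Rightarrow> 'a" where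
  "meval p x = (\<Sum>m\<in>Poly_Mapping.keys p. Poly_Mapping.lookup p m *
       (\<Prod>v\<in>Poly_Mapping.keys m. x v ^ Poly_Mapping.lookup m v))"

definition mvars :: "('w, 'a::zero) mpoly \<Rightarrow> 'w set" where
  "mvars p = (\<Union>m\<in>Poly_Mapping.keys p. Poly_Mapping.keys m)"

text \<open>K^A: coefficient vectors indexed by the support set A (zero outside A).\<close>
definition coeff_space :: "('v \<Rightarrow>\<^sub>0 nat) set \<Rightarrow> (('v \<Rightarrow>\<^sub>0 nat) \<Rightarrow> 'a::zero) set" where
  "coeff_space A = {c. \<forall>a. a \<notin> A \<longrightarrow> c a = 0}"

definition poly_of_coeffs :: "('v \<Rightarrow>\<^sub>0 nat) set \<Rightarrow> (('v \<Rightarrow>\<^sub>0 nat) \<Rightarrow> 'a::comm_monoid_add) \<Rightarrow> ('v, 'a) mpoly" where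
  "poly_of_coeffs A c = (\<Sum>a\<in>A. mmonom a (c a))"

definition zariski_open_coeffs ::
  "('v \<Rightarrow>\<^sub>0 nat) set \<Rightarrow> (('v \<Rightarrow>\<^sub>0 nat) \<Rightarrow> 'a::comm_ring_1) set \<Rightarrow> bool" where
  "zariski_open_coeffs A U \<longleftrightarrow> U \<subseteq> coeff_space A \<and>
     (\<exists>P :: ('v \<Rightarrow>\<^sub>0 nat, 'a) mpoly set. (\<forall>h\<in>P. mvars h \<subseteq> A) \<and>
        coeff_space A - U = {c \<in> coeff_space A. \<forall>h\<in>P. meval h c = 0})"

definition general_coeffs ::
  "('v \<Rightarrow>\<^sub>0 nat) set \<Rightarrow> ((('v \<Rightarrow>\<^sub>0 nat) \<Rightarrow> 'a::comm_ring_1) \<Rightarrow> bool) \<Rightarrow> bool" where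
  "general_coeffs A Q \<longleftrightarrow> (\<exists>U. zariski_open_coeffs A U \<and> U \<noteq> {} \<and> (\<forall>c\<in>U. Q c))"

definition in_ideal_gen :: "('v, 'a::comm_ring_1) mpoly \<Rightarrow> ('v, 'a) mpoly set \<Rightarrow> bool" where
  "in_ideal_gen p F \<longleftrightarrow> (\<exists>S g. finite S \<and> S \<subseteq> F \<and> p = (\<Sum>q\<in>S. g q * q))"

definition in_radical_gen :: "('v, 'a::comm_ring_1) mpoly \<Rightarrow> ('v, 'a) mpoly set \<Rightarrow> bool" where
  "in_radical_gen p F \<longleftrightarrow> (\<exists>m::nat. in_ideal_gen (p ^ m) F)"

end

theory Submission
  imports Defs "Jordan_Normal_Form.Determinant"
begin

lemma pm_expand: "p = (\<Sum>a\<in>Poly_Mapping.keys p. Poly_Mapping.single a (Poly_Mapping.lookup p a))"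
  by (rule poly_mapping_eqI) (simp add: lookup_sum lookup_single when_def in_keys_iff)

lemma lookup0_mult:
  fixes p q :: "('v \<Rightarrow>\<^sub>0 nat) \<Rightarrow>\<^sub>0 'a::comm_ring_1"
  shows "Poly_Mapping.lookup (p * q) 0 = Poly_Mapping.lookup p 0 * Poly_Mapping.lookup q 0"
proof -
  have e: "(0 = l + r) \<longleftrightarrow> (l = 0 \<and> r = 0)" for l r :: "'v \<Rightarrow>\<^sub>0 nat"
    by (metis add_cancel_right_left add_eq_0_iff_both_eq_0 lookup_add lookup_zero poly_mapping_eqI)
  have X: "(\<lambda>l. Poly_Mapping.lookup p l * Sum_any (\<lambda>r. (Poly_Mapping.lookup q r when 0 = l + r)))
     = (\<lambda>l. (Poly_Mapping.lookup p l * Poly_Mapping.lookup q 0) when l = 0)"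
  proof
    fix l :: "'v \<Rightarrow>\<^sub>0 nat"
    show "Poly_Mapping.lookup p l * Sum_any (\<lambda>r. (Poly_Mapping.lookup q r when 0 = l + r))
     = ((Poly_Mapping.lookup p l * Poly_Mapping.lookup q 0) when l = 0)"
      by (cases "l = 0") (simp_all add: e)
  qed
  show ?thesis unfolding lookup_mult X by simp
qed

definition mv :: "('w \<Rightarrow>\<^sub>0 nat) \<Rightarrow> ('w \<Rightarrow> 'a::comm_ring_1) \<Rightarrow> 'a" where
  "mv m x = (\<Prod>v\<in>Poly_Mapping.keys m. x v ^ Poly_Mapping.lookup m v)"

lemma mv_superset: "finite S \<Longrightarrow> Poly_Mapping.keys m \<subseteq> S \<Longrightarrow>
   mv m x = (\<Prod>v\<in>S. x v ^ Poly_Mapping.lookup m v)"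
  unfolding mv_def by (rule prod.mono_neutral_left) (auto simp: in_keys_iff)

lemma mv_add: "mv (a + b) x = mv a x * mv b x"
proof -
  let ?S = "Poly_Mapping.keys a \<union> Poly_Mapping.keys b"
  have "mv (a+b) x = (\<Prod>v\<in>?S. x v ^ Poly_Mapping.lookup (a+b) v)"
    using keys_add[of a b] by (intro mv_superset) auto
  also have "\<dots> = (\<Prod>v\<in>?S. x v ^ Poly_Mapping.lookup a v) * (\<Prod>v\<in>?S. x v ^ Poly_Mapping.lookup b v)"
    by (simp add: lookup_add power_add prod.distrib)
  also have "\<dots> = mv a x * mv b x" using mv_superset[of ?S a x] mv_superset[of ?S b x] by simp
  finally show ?thesis .
qed

lemma mv_zero [simp]: "mv 0 x = 1" by (simp add: mv_def)

lemma mv_single [simp]: "mv (Poly_Mapping.single v k) x = x v ^ k"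
  by (cases "k = 0") (simp_all add: mv_def)

lemma meval_mv: "meval p x = (\<Sum>m\<in>Poly_Mapping.keys p. Poly_Mapping.lookup p m * mv m x)"
  unfolding meval_def mv_def ..

lemma meval_superset: "finite S \<Longrightarrow> Poly_Mapping.keys p \<subseteq> S \<Longrightarrow>
   meval p x = (\<Sum>m\<in>S. Poly_Mapping.lookup p m * mv m x)"
  unfolding meval_mv by (rule sum.mono_neutral_left) (auto simp: in_keys_iff)

lemma meval_add: "meval (p + q) x = meval p x + meval q x"
proof -
  let ?S = "Poly_Mapping.keys p \<union> Poly_Mapping.keys q"
  have "meval (p+q) x = (\<Sum>m\<in>?S. Poly_Mapping.lookup (p+q) m * mv m x)"
    using keys_add[of p q] by (intro meval_superset) auto
  also have "\<dots> = (\<Sum>m\<in>?S. Poly_Mapping.lookup p m * mv m x) + (\<Sum>m\<in>?S. Poly_Mapping.lookup q m * mv m x)"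
    by (simp add: lookup_add distrib_right sum.distrib)
  also have "\<dots> = meval p x + meval q x" using meval_superset[of ?S p x] meval_superset[of ?S q x] by simp
  finally show ?thesis .
qed

lemma meval_zero [simp]: "meval 0 x = 0" by (simp add: meval_def)

lemma meval_single [simp]: "meval (Poly_Mapping.single m c) x = c * mv m x"
  by (cases "c = 0") (simp_all add: meval_mv)

lemma meval_sum: "meval (sum f S) x = (\<Sum>i\<in>S. meval (f i) x)"
  by (induction S rule: infinite_finite_induct) (simp_all add: meval_add)

lemma meval_mult: "meval (p * q) x = meval p x * meval q x"
proof -
  let ?P = "Poly_Mapping.keys p" and ?Q = "Poly_Mapping.keys q"
  have "p * q = (\<Sum>a\<in>?P. Poly_Mapping.single a (Poly_Mapping.lookup p a)) *
                (\<Sum>b\<in>?Q. Poly_Mapping.single b (Poly_Mapping.lookup q b))"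
    by (simp flip: pm_expand)
  also have "\<dots> = (\<Sum>a\<in>?P. \<Sum>b\<in>?Q. Poly_Mapping.single (a+b) (Poly_Mapping.lookup p a * Poly_Mapping.lookup q b))"
    by (simp add: sum_product mult_single)
  finally have "meval (p*q) x = (\<Sum>a\<in>?P. \<Sum>b\<in>?Q. (Poly_Mapping.lookup p a * mv a x) * (Poly_Mapping.lookup q b * mv b x))"
    by (simp add: meval_sum mv_add mult_ac)
  also have "\<dots> = meval p x * meval q x"
    by (simp add: meval_mv sum_product)
  finally show ?thesis .
qed

lemma meval_one [simp]: "meval 1 x = 1"
proof -
  have "meval (Poly_Mapping.single 0 1) x = 1" by (simp del: single_one)
  then show ?thesis by simp
qed

lemma meval_hom: "comm_ring_hom (\<lambda>p. meval p x)"
  by unfold_locales (simp_all add: meval_add meval_mult)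

lemma meval_mvar [simp]: "meval (mvar a) x = x a"
  by (simp add: mvar_def)

lemma mdeg_superset: "finite S \<Longrightarrow> Poly_Mapping.keys a \<subseteq> S \<Longrightarrow>
   mdeg a = (\<Sum>v\<in>S. Poly_Mapping.lookup a v)"
  unfolding mdeg_def by (rule sum.mono_neutral_left) (auto simp: in_keys_iff)

lemma mdeg_add [simp]: "mdeg (a + b) = mdeg a + mdeg b"
proof -
  let ?S = "Poly_Mapping.keys a \<union> Poly_Mapping.keys b"
  have "mdeg (a+b) = (\<Sum>v\<in>?S. Poly_Mapping.lookup (a+b) v)"
    using keys_add[of a b] by (intro mdeg_superset) auto
  also have "\<dots> = mdeg a + mdeg b" using mdeg_superset[of ?S a] mdeg_superset[of ?S b] by (simp add: lookup_add sum.distrib)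
  finally show ?thesis .
qed

lemma mdeg_zero [simp]: "mdeg 0 = 0" by (simp add: mdeg_def)

lemma mdeg_single [simp]: "mdeg (Poly_Mapping.single i k) = k"
  by (cases "k = 0") (simp_all add: mdeg_def)

lemma mdeg_sum: "mdeg (sum f S) = (\<Sum>i\<in>S. mdeg (f i))"
  by (induction S rule: infinite_finite_induct) simp_all

lemma mdeg_eq_0: "mdeg a = 0 \<longleftrightarrow> a = 0"
proof
  assume "mdeg a = 0"
  then have "\<forall>i\<in>Poly_Mapping.keys a. Poly_Mapping.lookup a i = 0"
    unfolding mdeg_def by simp
  then show "a = 0" by (metis keys_eq_empty in_keys_iff ex_in_conv)
qed simp

lemma perm_mono_single [simp]: "perm_mono \<sigma> (Poly_Mapping.single i k) = Poly_Mapping.single (\<sigma> i) k"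
  by (cases "k = 0") (simp_all add: perm_mono_def)

lemma mdeg_perm_mono [simp]: "mdeg (perm_mono \<sigma> a) = mdeg a"
  by (simp only: perm_mono_def mdeg_sum mdeg_single) (simp add: mdeg_def)

lemma split1: "(a::'v \<Rightarrow>\<^sub>0 nat) \<noteq> 0 \<Longrightarrow> \<exists>i b. a = b + Poly_Mapping.single i 1"
proof -
  assume "a \<noteq> 0"
  then obtain i where i: "i \<in> Poly_Mapping.keys a" by (metis keys_eq_empty ex_in_conv)
  have "a = (a - Poly_Mapping.single i 1) + Poly_Mapping.single i 1"
    using i by (intro poly_mapping_eqI) (auto simp: lookup_add lookup_minus lookup_single when_def in_keys_iff)
  then show ?thesis by blast
qed

lemma mdeg_split: "k \<le> mdeg (a::'v \<Rightarrow>\<^sub>0 nat) \<Longrightarrow> \<exists>b c. a = b + c \<and> mdeg c = k"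
proof (induction k)
  case 0
  show ?case by (rule exI[of _ a], rule exI[of _ 0]) simp
next
  case (Suc k)
  then obtain b c where bc: "a = b + c" "mdeg c = k" by auto
  with Suc.prems have "b \<noteq> 0" by (auto simp: mdeg_eq_0)
  then obtain i b' where "b = b' + Poly_Mapping.single i 1" using split1 by blast
  with bc have "a = b' + (c + Poly_Mapping.single i 1) \<and> mdeg (c + Poly_Mapping.single i 1) = Suc k"
    by (simp add: add_ac)
  then show ?case by blast
qed

lemma ideal_zero: "in_ideal_gen 0 F"
  unfolding in_ideal_gen_def by (rule exI[of _ "{}"]) simp

lemma ideal_gen: "q \<in> F \<Longrightarrow> in_ideal_gen q F"
  unfolding in_ideal_gen_def by (rule exI[of _ "{q}"], rule exI[of _ "\<lambda>_. 1"]) simp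

lemma ideal_add: "in_ideal_gen p F \<Longrightarrow> in_ideal_gen q F \<Longrightarrow> in_ideal_gen (p + q) F"
proof -
  assume "in_ideal_gen p F" "in_ideal_gen q F"
  then obtain S1 g1 S2 g2 where 1: "finite S1" "S1 \<subseteq> F" "p = (\<Sum>r\<in>S1. g1 r * r)"
    and 2: "finite S2" "S2 \<subseteq> F" "q = (\<Sum>r\<in>S2. g2 r * r)"
    unfolding in_ideal_gen_def by blast
  define g where "g r = (if r \<in> S1 then g1 r else 0) + (if r \<in> S2 then g2 r else 0)" for r
  have a: "(\<Sum>r\<in>S1 \<union> S2. (if r \<in> S1 then g1 r else 0) * r) = (\<Sum>r\<in>S1. g1 r * r)"
    using 1 2 by (intro sum.mono_neutral_cong_right) auto
  have b: "(\<Sum>r\<in>S1 \<union> S2. (if r \<in> S2 then g2 r else 0) * r) = (\<Sum>r\<in>S2. g2 r * r)"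
    using 1 2 by (intro sum.mono_neutral_cong_right) auto
  have e: "p + q = (\<Sum>r\<in>S1 \<union> S2. g r * r)"
    unfolding g_def distrib_right sum.distrib a b 1 2 ..
  show ?thesis unfolding in_ideal_gen_def
    by (rule exI[of _ "S1 \<union> S2"], rule exI[of _ g]) (use 1 2 e in simp)
qed

lemma ideal_mult: "in_ideal_gen p F \<Longrightarrow> in_ideal_gen (r * p) F"
proof -
  assume "in_ideal_gen p F"
  then obtain S g where 1: "finite S" "S \<subseteq> F" "p = (\<Sum>q\<in>S. g q * q)"
    unfolding in_ideal_gen_def by blast
  have e: "r * p = (\<Sum>q\<in>S. (r * g q) * q)" unfolding 1 by (simp add: sum_distrib_left mult.assoc)
  show ?thesis unfolding in_ideal_gen_def
    by (rule exI[of _ S], rule exI[of _ "\<lambda>q. r * g q"]) (use 1 e in simp)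
qed

lemma ideal_sum: "(\<And>i. i \<in> I \<Longrightarrow> in_ideal_gen (f i) F) \<Longrightarrow> in_ideal_gen (sum f I) F"
  by (induction I rule: infinite_finite_induct) (simp_all add: ideal_zero ideal_add)

lemma lookup_poc: "finite A \<Longrightarrow> Poly_Mapping.lookup (poly_of_coeffs A c) a = (if a \<in> A then c a else 0)"
  by (simp add: poly_of_coeffs_def mmonom_def lookup_sum lookup_single when_def)

lemma keys_poc: "finite A \<Longrightarrow> Poly_Mapping.keys (poly_of_coeffs A c) \<subseteq> A"
  by (auto simp: in_keys_iff lookup_poc split: if_splits)

lemma perm_poly_poc: "finite A \<Longrightarrow>
  perm_poly \<sigma> (poly_of_coeffs A c) = (\<Sum>a\<in>A. Poly_Mapping.single (perm_mono \<sigma> a) (c a))"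
proof -
  assume A: "finite A"
  let ?f = "poly_of_coeffs A c"
  have "perm_poly \<sigma> ?f = (\<Sum>a\<in>A. Poly_Mapping.single (perm_mono \<sigma> a) (Poly_Mapping.lookup ?f a))"
    unfolding perm_poly_def using A keys_poc[OF A, of c]
    by (intro sum.mono_neutral_left) (auto simp: in_keys_iff)
  also have "\<dots> = (\<Sum>a\<in>A. Poly_Mapping.single (perm_mono \<sigma> a) (c a))"
    using A by (intro sum.cong) (auto simp: lookup_poc)
  finally show ?thesis .
qed

lemma lookup0_pow:
  fixes p :: "('v \<Rightarrow>\<^sub>0 nat) \<Rightarrow>\<^sub>0 'a::comm_ring_1"
  shows "Poly_Mapping.lookup (p ^ m) 0 = (Poly_Mapping.lookup p 0) ^ m"
  by (induction m) (simp_all add: lookup0_mult)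

lemma lookup0_ideal:
  fixes p :: "('v \<Rightarrow>\<^sub>0 nat) \<Rightarrow>\<^sub>0 'a::comm_ring_1"
  assumes "in_ideal_gen p F" "\<forall>q\<in>F. Poly_Mapping.lookup q 0 = 0"
  shows "Poly_Mapping.lookup p 0 = 0"
proof -
  from assms(1) obtain S g where "finite S" "S \<subseteq> F" "p = (\<Sum>q\<in>S. g q * q)"
    unfolding in_ideal_gen_def by blast
  with assms(2) show ?thesis by (auto simp: lookup_sum lookup0_mult intro!: sum.neutral)
qed

lemma single_neq0 [simp]: "Poly_Mapping.single q (v::'a::zero) = 0 \<longleftrightarrow> v = 0"
  by (metis lookup_single_eq lookup_zero single_zero)

lemma mvar_mult: "Poly_Mapping.single b (c::'a::comm_ring_1) * mvar i = Poly_Mapping.single (b + Poly_Mapping.single i 1) c"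
  by (simp add: mvar_def mult_single)

lemma ideal_x_iff:
  fixes p :: "('v \<Rightarrow>\<^sub>0 nat) \<Rightarrow>\<^sub>0 'a::comm_ring_1"
  shows "in_ideal_gen p (range mvar) \<longleftrightarrow> Poly_Mapping.lookup p 0 = 0"
proof
  assume "in_ideal_gen p (range mvar)"
  then show "Poly_Mapping.lookup p 0 = 0"
    by (rule lookup0_ideal) (auto simp: mvar_def lookup_single when_def)
next
  assume p0: "Poly_Mapping.lookup p 0 = 0"
  have "in_ideal_gen (\<Sum>m\<in>Poly_Mapping.keys p. Poly_Mapping.single m (Poly_Mapping.lookup p m)) (range mvar)"
  proof (rule ideal_sum)
    fix m assume m: "m \<in> Poly_Mapping.keys p"
    with p0 have "m \<noteq> 0" by (auto simp: in_keys_iff)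
    then obtain i b where "m = b + Poly_Mapping.single i 1" using split1 by blast
    then have "Poly_Mapping.single m (Poly_Mapping.lookup p m) = Poly_Mapping.single b (Poly_Mapping.lookup p m) * mvar i"
      by (simp add: mvar_mult)
    then show "in_ideal_gen (Poly_Mapping.single m (Poly_Mapping.lookup p m)) (range mvar)"
      by (simp add: ideal_mult ideal_gen)
  qed
  then show "in_ideal_gen p (range mvar)" by (simp flip: pm_expand)
qed

lemma keys_pow_deg:
  fixes p :: "('v \<Rightarrow>\<^sub>0 nat) \<Rightarrow>\<^sub>0 'a::comm_ring_1"
  assumes p0: "Poly_Mapping.lookup p 0 = 0"
  shows "m \<in> Poly_Mapping.keys (p ^ k) \<Longrightarrow> k \<le> mdeg m"
proof (induction k arbitrary: m)
  case 0
  then show ?case by simp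
next
  case (Suc k)
  then obtain a b where ab: "m = a + b" "a \<in> Poly_Mapping.keys p" "b \<in> Poly_Mapping.keys (p ^ k)"
    using keys_mult[of p "p ^ k"] by auto
  with p0 have "a \<noteq> 0" by (auto simp: in_keys_iff)
  then have "1 \<le> mdeg a" using mdeg_eq_0[of a] by linarith
  with Suc.IH[OF ab(3)] ab(1) show ?case by simp
qed

lemma pow_in_ideal:
  fixes p :: "('v \<Rightarrow>\<^sub>0 nat) \<Rightarrow>\<^sub>0 'a::comm_ring_1"
  assumes mon: "\<And>\<gamma>. mdeg \<gamma> = N \<Longrightarrow> in_ideal_gen (Poly_Mapping.single \<gamma> 1) F"
    and p0: "Poly_Mapping.lookup p 0 = 0"
  shows "in_ideal_gen (p ^ N) F"
proof -
  have "in_ideal_gen (\<Sum>m\<in>Poly_Mapping.keys (p^N). Poly_Mapping.single m (Poly_Mapping.lookup (p^N) m)) F"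
  proof (rule ideal_sum)
    fix m assume m: "m \<in> Poly_Mapping.keys (p ^ N)"
    then have "N \<le> mdeg m" by (rule keys_pow_deg[OF p0])
    then obtain b c where bc: "m = b + c" "mdeg c = N" using mdeg_split by blast
    then have "Poly_Mapping.single m (Poly_Mapping.lookup (p^N) m) =
       Poly_Mapping.single b (Poly_Mapping.lookup (p^N) m) * Poly_Mapping.single c 1"
      by (simp add: mult_single)
    then show "in_ideal_gen (Poly_Mapping.single m (Poly_Mapping.lookup (p^N) m)) F"
      using mon[OF bc(2)] by (simp add: ideal_mult)
  qed
  then show ?thesis by (simp flip: pm_expand)
qed

lemma lookup_single0_mult:
  fixes p :: "('v \<Rightarrow>\<^sub>0 nat) \<Rightarrow>\<^sub>0 'a::comm_ring_1"
  shows "Poly_Mapping.lookup (Poly_Mapping.single 0 s * p) x = s * Poly_Mapping.lookup p x"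
proof -
  have X: "(\<lambda>l. Poly_Mapping.lookup (Poly_Mapping.single 0 s) l * Sum_any (\<lambda>r. (Poly_Mapping.lookup p r when x = l + r)))
     = (\<lambda>l. (s * Poly_Mapping.lookup p x) when l = 0)"
  proof
    fix l :: "'v \<Rightarrow>\<^sub>0 nat"
    show "Poly_Mapping.lookup (Poly_Mapping.single 0 s) l * Sum_any (\<lambda>r. (Poly_Mapping.lookup p r when x = l + r))
     = ((s * Poly_Mapping.lookup p x) when l = 0)"
      by (cases "l = 0") (simp_all add: lookup_single)
  qed
  show ?thesis unfolding lookup_mult X by simp
qed

lemma finite_Mon: "finite {\<alpha> :: 'v::finite \<Rightarrow>\<^sub>0 nat. mdeg \<alpha> = N}"
proof -
  have fin: "finite (PiE (UNIV::'v set) (\<lambda>_. {..N}))" by (intro finite_PiE) auto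
  have "{\<alpha> :: 'v \<Rightarrow>\<^sub>0 nat. mdeg \<alpha> = N} \<subseteq> Poly_Mapping.lookup -` (PiE UNIV (\<lambda>_. {..N}))"
  proof
    fix \<alpha> :: "'v \<Rightarrow>\<^sub>0 nat" assume "\<alpha> \<in> {\<alpha>. mdeg \<alpha> = N}"
    then have "mdeg \<alpha> = N" by simp
    moreover have "Poly_Mapping.lookup \<alpha> v \<le> mdeg \<alpha>" for v
      using mdeg_superset[of UNIV \<alpha>] by (simp add: member_le_sum)
    ultimately have "\<forall>v. Poly_Mapping.lookup \<alpha> v \<le> N" by metis
    then show "\<alpha> \<in> Poly_Mapping.lookup -` (PiE UNIV (\<lambda>_. {..N}))" by (simp add: PiE_iff)
  qed
  moreover have "finite ((Poly_Mapping.lookup :: ('v \<Rightarrow>\<^sub>0 nat) \<Rightarrow> _) -` (PiE UNIV (\<lambda>_. {..N})))"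
  proof -
    have "inj (Poly_Mapping.lookup :: ('v \<Rightarrow>\<^sub>0 nat) \<Rightarrow> _)" by (rule injI, rule poly_mapping_eqI) simp
    then show ?thesis using finite_vimageI[OF fin] by blast
  qed
  ultimately show ?thesis by (rule finite_subset)
qed

lemma pigeon: "mdeg (\<alpha> :: 'v::finite \<Rightarrow>\<^sub>0 nat) = card (UNIV::'v set) * d \<Longrightarrow> \<exists>j. d \<le> Poly_Mapping.lookup \<alpha> j"
proof (rule ccontr)
  assume a: "mdeg \<alpha> = card (UNIV::'v set) * d" and "\<not> (\<exists>j. d \<le> Poly_Mapping.lookup \<alpha> j)"
  then have "\<forall>j. Poly_Mapping.lookup \<alpha> j < d" by (simp add: not_le)
  then have "(\<Sum>v\<in>UNIV. Poly_Mapping.lookup \<alpha> v) < (\<Sum>v\<in>(UNIV::'v set). d)"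
    by (intro sum_strict_mono) (auto simp: not_le)
  moreover have "mdeg \<alpha> = (\<Sum>v\<in>UNIV. Poly_Mapping.lookup \<alpha> v)" by (rule mdeg_superset) auto
  ultimately show False using a by simp
qed

lemma mvars_add: "mvars (p + q) \<subseteq> mvars p \<union> mvars q"
  unfolding mvars_def using keys_add[of p q] by auto

lemma mvars_mult: "mvars (p * q) \<subseteq> mvars p \<union> mvars q"
proof
  fix v assume "v \<in> mvars (p * q)"
  then obtain m where m: "m \<in> Poly_Mapping.keys (p*q)" "v \<in> Poly_Mapping.keys m" unfolding mvars_def by auto
  then obtain a b where ab: "m = a + b" "a \<in> Poly_Mapping.keys p" "b \<in> Poly_Mapping.keys q"
    using keys_mult[of p q] by blast
  from m(2) ab(1) keys_add[of a b] have "v \<in> Poly_Mapping.keys a \<union> Poly_Mapping.keys b" by blast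
  then show "v \<in> mvars p \<union> mvars q" using ab(2,3) unfolding mvars_def by blast
qed

lemma mvars_sum: "(\<And>i. i \<in> S \<Longrightarrow> mvars (f i) \<subseteq> A) \<Longrightarrow> mvars (sum f S) \<subseteq> A"
proof (induction S rule: infinite_finite_induct)
  case (insert x F)
  have 1: "mvars (sum f F) \<subseteq> A" by (rule insert.IH) (rule insert.prems, simp)
  have 2: "mvars (f x) \<subseteq> A" by (rule insert.prems) simp
  have eq: "sum f (insert x F) = f x + sum f F" using insert.hyps by simp
  show ?case unfolding eq using mvars_add[of "f x" "sum f F"] 1 2 by blast
qed (simp_all add: mvars_def)

lemma mvars_prod: "(\<And>i. i \<in> S \<Longrightarrow> mvars (f i) \<subseteq> A) \<Longrightarrow> mvars (prod f S) \<subseteq> (A :: 'w set)"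
  for f :: "_ \<Rightarrow> ('w, 'a::comm_ring_1) mpoly"
proof (induction S rule: infinite_finite_induct)
  case (insert x F)
  have 1: "mvars (prod f F) \<subseteq> A" by (rule insert.IH) (rule insert.prems, simp)
  have 2: "mvars (f x) \<subseteq> A" by (rule insert.prems) simp
  have eq: "prod f (insert x F) = f x * prod f F" using insert.hyps by simp
  show ?case unfolding eq using mvars_mult[of "f x" "prod f F"] 1 2 by blast
qed (simp_all add: mvars_def)

lemma mvars_of_int: "mvars (of_int k :: ('w, 'a::comm_ring_1) mpoly) = {}"
  by (simp add: mvars_def flip: single_of_int)

lemma mvars_mvar: "mvars (mvar a :: ('w, 'a::comm_ring_1) mpoly) = {a}"
  by (simp add: mvars_def mvar_def)

lemma mvars_det:
  fixes M :: "('w, 'a::comm_ring_1) mpoly mat"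
  assumes "M \<in> carrier_mat m m" "\<And>i j. i < m \<Longrightarrow> j < m \<Longrightarrow> mvars (M $$ (i,j)) \<subseteq> A"
  shows "mvars (det M) \<subseteq> A"
proof -
  have "mvars (\<Sum>p \<in> {p. p permutes {0..<m}}. signof p * (\<Prod>i = 0..<m. M $$ (i, p i))) \<subseteq> A"
  proof (rule mvars_sum)
    fix p assume p: "p \<in> {p. p permutes {0..<m}}"
    have "mvars (\<Prod>i = 0..<m. M $$ (i, p i)) \<subseteq> A"
    proof (rule mvars_prod)
      fix i assume "i \<in> {0..<m}"
      moreover from this p have "p i \<in> {0..<m}" by (auto simp: permutes_in_image)
      ultimately show "mvars (M $$ (i, p i)) \<subseteq> A" using assms(2) by auto
    qed
    then show "mvars (signof p * (\<Prod>i = 0..<m. M $$ (i, p i))) \<subseteq> A"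
      using mvars_mult[of "signof p" "\<Prod>i = 0..<m. M $$ (i, p i)"] mvars_of_int[of "sign p"] by auto
  qed
  then show ?thesis unfolding det_def'[OF assms(1)] .
qed

unbundle no m_inv_syntax


theorem theorem1p1:
  fixes A :: "('v::finite \<Rightarrow>\<^sub>0 nat) set"
    and G :: "('v \<Rightarrow> 'v) set"
    and d :: nat
    and K_type :: "'a::field itself"
  assumes K_infinite: "infinite (UNIV :: 'a set)"
    and A_fin: "finite A" and A_ne: "A \<noteq> {}"
    and A_hom: "\<forall>a\<in>A. mdeg a = d"
    and d_pos: "d \<ge> 1"
    and A_pow: "\<exists>i. Poly_Mapping.single i d \<in> A"
    and G_perm: "\<forall>\<sigma>\<in>G. bij \<sigma>"
    and G_id: "id \<in> G"
    and G_comp: "\<forall>\<sigma>\<in>G. \<forall>\<tau>\<in>G. \<sigma> \<circ> \<tau> \<in> G"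
    and G_inv: "\<forall>\<sigma>\<in>G. inv \<sigma> \<in> G"
    and G_trans: "\<forall>i j. \<exists>\<sigma>\<in>G. \<sigma> i = j"
  shows "general_coeffs A (\<lambda>c :: ('v \<Rightarrow>\<^sub>0 nat) \<Rightarrow> 'a.
           \<forall>p :: ('v, 'a) mpoly.
             in_radical_gen p ((\<lambda>\<sigma>. perm_poly \<sigma> (poly_of_coeffs A c)) ` G)
             \<longleftrightarrow> in_ideal_gen p (range mvar))"
proof -
  obtain i0 where i0: "Poly_Mapping.single i0 d \<in> A" using A_pow by blast
  define n where "n = card (UNIV::'v set)"
  define N where "N = n * d"
  define Mon where "Mon = {\<alpha> :: 'v \<Rightarrow>\<^sub>0 nat. mdeg \<alpha> = N}"
  have finMon: "finite Mon" unfolding Mon_def by (rule finite_Mon)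
  obtain L where L: "distinct L" "set L = Mon" using finite_distinct_list[OF finMon] by blast
  define m where "m = length L"
  have Lm: "L ! k \<in> Mon" if "k < m" for k using L(2) that m_def nth_mem by blast
  have Lex: "\<exists>r<m. L ! r = \<gamma>" if "\<gamma> \<in> Mon" for \<gamma> using L(2) that by (metis in_set_conv_nth m_def)
  have Linj: "(L ! i = L ! j) = (i = j)" if "i < m" "j < m" for i j
    using nth_eq_iff_index_eq[OF L(1)] that m_def by blast
  define jj where "jj \<alpha> = (SOME j. d \<le> Poly_Mapping.lookup \<alpha> j)" for \<alpha> :: "'v \<Rightarrow>\<^sub>0 nat"
  define sg where "sg \<alpha> = (SOME \<sigma>. \<sigma> \<in> G \<and> \<sigma> i0 = jj \<alpha>)" for \<alpha>
  define bt where "bt \<alpha> = \<alpha> - Poly_Mapping.single (jj \<alpha>) d" for \<alpha>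
  have jj: "d \<le> Poly_Mapping.lookup \<alpha> (jj \<alpha>)" if "\<alpha> \<in> Mon" for \<alpha>
  proof -
    have "\<exists>j. d \<le> Poly_Mapping.lookup \<alpha> j" using pigeon[of \<alpha> d] that by (simp add: Mon_def N_def n_def)
    from someI_ex[OF this] show ?thesis unfolding jj_def .
  qed
  have sg: "sg \<alpha> \<in> G \<and> sg \<alpha> i0 = jj \<alpha>" for \<alpha>
  proof -
    have "\<exists>\<sigma>. \<sigma> \<in> G \<and> \<sigma> i0 = jj \<alpha>" using G_trans by blast
    from someI_ex[OF this] show ?thesis unfolding sg_def .
  qed
  have bt: "bt \<alpha> + Poly_Mapping.single (jj \<alpha>) d = \<alpha>" if "\<alpha> \<in> Mon" for \<alpha>
    using jj[OF that] by (intro poly_mapping_eqI) (auto simp: bt_def lookup_add lookup_minus lookup_single when_def)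
  have mdeg_bt: "mdeg (bt \<alpha>) + d = N" if "\<alpha> \<in> Mon" for \<alpha>
    using arg_cong[OF bt[OF that], of mdeg] that by (simp add: Mon_def)

  define f where "f c = poly_of_coeffs A c" for c :: "('v \<Rightarrow>\<^sub>0 nat) \<Rightarrow> 'a"
  define E where "E \<alpha> \<gamma> c = (\<Sum>a\<in>A. if bt \<alpha> + perm_mono (sg \<alpha>) a = \<gamma> then c a else (0::'a))" for \<alpha> \<gamma> c
  define Ep where "Ep \<alpha> \<gamma> = (\<Sum>a\<in>A. if bt \<alpha> + perm_mono (sg \<alpha>) a = \<gamma> then mvar a else (0::('v \<Rightarrow>\<^sub>0 nat, 'a) mpoly))" for \<alpha> \<gamma>
  define Mc where "Mc c = mat m m (\<lambda>(r,k). E (L!k) (L!r) c)" for c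
  define Mp where "Mp = mat m m (\<lambda>(r,k). Ep (L!k) (L!r))"
  define h where "h = det Mp"
  have Q: "Poly_Mapping.single (bt \<alpha>) 1 * perm_poly (sg \<alpha>) (f c) = (\<Sum>a\<in>A. Poly_Mapping.single (bt \<alpha> + perm_mono (sg \<alpha>) a) (c a))" for \<alpha> c
    by (simp add: f_def perm_poly_poc[OF A_fin] sum_distrib_left mult_single)
  have lookupQ: "Poly_Mapping.lookup (Poly_Mapping.single (bt \<alpha>) 1 * perm_poly (sg \<alpha>) (f c)) \<gamma> = E \<alpha> \<gamma> c" for \<alpha> \<gamma> c
    unfolding Q E_def by (simp add: lookup_sum lookup_single when_def)
  have mevalEp: "meval (Ep \<alpha> \<gamma>) c = E \<alpha> \<gamma> c" for \<alpha> \<gamma> c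
    unfolding Ep_def E_def meval_sum by (intro sum.cong) auto
  have hc: "meval h c = det (Mc c)" for c
  proof -
    interpret comm_ring_hom "\<lambda>p. meval p c" by (rule meval_hom)
    have "map_mat (\<lambda>p. meval p c) Mp = Mc c" unfolding Mp_def Mc_def by (rule eq_matI) (auto simp: mevalEp)
    then show ?thesis unfolding h_def by (metis hom_det)
  qed
  have mv0: "mvars (0::('v \<Rightarrow>\<^sub>0 nat, 'a) mpoly) = {}" by (simp add: mvars_def)
  have mvh: "mvars h \<subseteq> A" unfolding h_def
  proof (rule mvars_det[of Mp m])
    show "Mp \<in> carrier_mat m m" by (simp add: Mp_def)
    fix i j assume "i < m" "j < m"
    then have "Mp $$ (i,j) = Ep (L!j) (L!i)" by (simp add: Mp_def)
    moreover have "mvars (Ep \<alpha> \<gamma>) \<subseteq> A" for \<alpha> \<gamma> unfolding Ep_def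
      by (rule mvars_sum) (auto simp: mvars_mvar mv0)
    ultimately show "mvars (Mp $$ (i,j)) \<subseteq> A" by simp
  qed

  define c0 where "c0 a = (if a = Poly_Mapping.single i0 d then 1 else (0::'a))" for a
  have E0: "E \<alpha> \<gamma> c0 = (if \<alpha> = \<gamma> then 1 else 0)" if "\<alpha> \<in> Mon" for \<alpha> \<gamma>
  proof -
    have "E \<alpha> \<gamma> c0 = (\<Sum>a\<in>A. if a = Poly_Mapping.single i0 d then (if bt \<alpha> + perm_mono (sg \<alpha>) a = \<gamma> then 1 else 0) else (0::'a))"
      unfolding E_def c0_def by (intro sum.cong) auto
    also have "\<dots> = (if bt \<alpha> + perm_mono (sg \<alpha>) (Poly_Mapping.single i0 d) = \<gamma> then 1 else 0)"
      using i0 A_fin by (simp add: sum.delta)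
    also have "\<dots> = (if \<alpha> = \<gamma> then 1 else 0)" using sg[of \<alpha>] bt[OF that] by simp
    finally show ?thesis .
  qed
  have Mc0: "Mc c0 = 1\<^sub>m m"
  proof (rule eq_matI)
    fix i j assume "i < dim_row (1\<^sub>m m)" "j < dim_col (1\<^sub>m m)"
    then have ij: "i < m" "j < m" by auto
    then show "Mc c0 $$ (i,j) = 1\<^sub>m m $$ (i,j)" using E0[OF Lm[OF ij(2)]] Linj[OF ij(2,1)] by (simp add: Mc_def)
  qed (simp_all add: Mc_def)

  have span: "in_ideal_gen (Poly_Mapping.single \<gamma> 1) ((\<lambda>\<sigma>. perm_poly \<sigma> (f c)) ` G)"
    if dc: "det (Mc c) \<noteq> 0" and \<gamma>: "\<gamma> \<in> Mon" for c \<gamma>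
  proof -
    have carr: "Mc c \<in> carrier_mat m m" by (simp add: Mc_def)
    from det_non_zero_imp_unit[OF carr dc, unfolded Units_def, of "()"]
    obtain B where B: "B \<in> carrier_mat m m" "Mc c * B = 1\<^sub>m m" by (auto simp: ring_mat_def)
    from Lex[OF \<gamma>] obtain r where r: "r < m" "L!r = \<gamma>" by blast
    define y where "y k = B $$ (k, r)" for k
    define P where "P = (\<Sum>k<m. Poly_Mapping.single (bt (L!k)) (y k) * perm_poly (sg (L!k)) (f c))"
    have "in_ideal_gen P ((\<lambda>\<sigma>. perm_poly \<sigma> (f c)) ` G)"
      unfolding P_def by (intro ideal_sum ideal_mult ideal_gen) (use sg in auto)
    moreover have "P = Poly_Mapping.single \<gamma> 1"
    proof (rule poly_mapping_eqI)
      fix \<gamma>'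
      have sc: "Poly_Mapping.single b yk * perm_poly \<sigma> (f c) = Poly_Mapping.single 0 yk * (Poly_Mapping.single b 1 * perm_poly \<sigma> (f c))" for b yk \<sigma>
        by (simp add: mult_single mult.assoc[symmetric])
      have LP: "Poly_Mapping.lookup P \<gamma>' = (\<Sum>k<m. y k * E (L!k) \<gamma>' c)"
        unfolding P_def lookup_sum
        by (intro sum.cong refl, subst sc) (simp only: lookup_single0_mult lookupQ)
      show "Poly_Mapping.lookup P \<gamma>' = Poly_Mapping.lookup (Poly_Mapping.single \<gamma> 1) \<gamma>'"
      proof (cases "\<gamma>' \<in> Mon")
        case True
        from Lex[OF True] obtain r' where r': "r' < m" "L!r' = \<gamma>'" by blast
        have "(Mc c * B) $$ (r', r) = (\<Sum>i\<in>{0..<m}. Mc c $$ (r', i) * B $$ (i, r))"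
          using B(1) r r' carr by (simp add: scalar_prod_def)
        also have "\<dots> = (\<Sum>k<m. y k * E (L!k) \<gamma>' c)"
          using r' by (simp add: atLeast0LessThan Mc_def y_def mult.commute)
        finally have "Poly_Mapping.lookup P \<gamma>' = (Mc c * B) $$ (r', r)" using LP by simp
        also have "\<dots> = (if r' = r then 1 else 0)" using B r r' by simp
        also have "\<dots> = Poly_Mapping.lookup (Poly_Mapping.single \<gamma> 1) \<gamma>'"
          using r r' Linj[OF r(1) r'(1)] by (auto simp: lookup_single)
        finally show ?thesis .
      next
        case False
        have "E (L!k) \<gamma>' c = 0" if "k < m" for k
        proof -
          have Lk: "L!k \<in> Mon" using Lm[OF that] .
          have "bt (L!k) + perm_mono (sg (L!k)) a \<noteq> \<gamma>'" if "a \<in> A" for a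
            using False mdeg_bt[OF Lk] A_hom that by (auto simp: Mon_def)
          then show ?thesis unfolding E_def by (intro sum.neutral) auto
        qed
        moreover have "\<gamma>' \<noteq> \<gamma>" using False \<gamma> by auto
        ultimately show ?thesis using LP by (simp add: lookup_single)
      qed
    qed
    ultimately show ?thesis by simp
  qed

  define U where "U = {c \<in> coeff_space A. meval h c \<noteq> 0}"
  have c0U: "c0 \<in> U" unfolding U_def using hc[of c0] Mc0 i0 by (auto simp: coeff_space_def c0_def)
  have zo: "zariski_open_coeffs A U"
    unfolding zariski_open_coeffs_def
    by (rule conjI, force simp: U_def, rule exI[of _ "{h}"]) (use mvh in \<open>auto simp: U_def\<close>)
  have propc: "\<forall>p. in_radical_gen p ((\<lambda>\<sigma>. perm_poly \<sigma> (poly_of_coeffs A c)) ` G) \<longleftrightarrow> in_ideal_gen p (range mvar)"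
    if cU: "c \<in> U" for c
  proof (intro allI iffI)
    fix p :: "('v, 'a) mpoly"
    assume "in_radical_gen p ((\<lambda>\<sigma>. perm_poly \<sigma> (poly_of_coeffs A c)) ` G)"
    then obtain k where k: "in_ideal_gen (p ^ k) ((\<lambda>\<sigma>. perm_poly \<sigma> (poly_of_coeffs A c)) ` G)"
      unfolding in_radical_gen_def by blast
    have z: "\<forall>q \<in> (\<lambda>\<sigma>. perm_poly \<sigma> (poly_of_coeffs A c)) ` G. Poly_Mapping.lookup q 0 = 0"
    proof
      fix q assume "q \<in> (\<lambda>\<sigma>. perm_poly \<sigma> (poly_of_coeffs A c)) ` G"
      then obtain \<sigma> where q: "q = perm_poly \<sigma> (poly_of_coeffs A c)" by blast
      have nz: "perm_mono \<sigma> a \<noteq> 0" if "a \<in> A" for a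
        using A_hom that d_pos mdeg_perm_mono[of \<sigma> a] by (metis mdeg_zero not_one_le_zero)
      show "Poly_Mapping.lookup q 0 = 0" unfolding q perm_poly_poc[OF A_fin] lookup_sum
        by (intro sum.neutral) (use nz in \<open>auto simp: lookup_single when_def\<close>)
    qed
    have "Poly_Mapping.lookup (p^k) 0 = 0" by (rule lookup0_ideal[OF k z])
    then have "Poly_Mapping.lookup p 0 = 0" by (simp add: lookup0_pow)
    then show "in_ideal_gen p (range mvar)" by (simp add: ideal_x_iff)
  next
    fix p :: "('v, 'a) mpoly"
    assume "in_ideal_gen p (range mvar)"
    then have p0: "Poly_Mapping.lookup p 0 = 0" by (simp add: ideal_x_iff)
    have "det (Mc c) \<noteq> 0" using cU hc by (simp add: U_def)
    then have "in_ideal_gen (Poly_Mapping.single \<gamma> 1) ((\<lambda>\<sigma>. perm_poly \<sigma> (poly_of_coeffs A c)) ` G)"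
      if "mdeg \<gamma> = N" for \<gamma> using span[of c \<gamma>] that by (simp add: Mon_def f_def)
    then have "in_ideal_gen (p ^ N) ((\<lambda>\<sigma>. perm_poly \<sigma> (poly_of_coeffs A c)) ` G)"
      using pow_in_ideal[OF _ p0] by blast
    then show "in_radical_gen p ((\<lambda>\<sigma>. perm_poly \<sigma> (poly_of_coeffs A c)) ` G)"
      unfolding in_radical_gen_def by blast
  qed
  show ?thesis unfolding general_coeffs_def using zo c0U propc by blast
qed

end
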